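(* Every proper list system admits a fair distribution.
   Context: Let $\mathbb{N}_k := \{0,1,\ldots,k-1\}$. A list system is a triple $(S,T,\mathcal{L})$, where $S$ is a set of $n_1 := |S|$ source nodes, $T$ is a set of $n_2 := |T|$ target nodes, and $\mathcal{L}: S\times \mathbb{N}_{\Delta_1} \to S$ assigns to every source node $s\in S$ a list $L_s$ of $\Delta_1 \le n_2$ not necessarily distinct elements of $S$. For $s,s'\in S$, $l(s,s')$ denotes how many times $s'$ appears in the list $L_s$. A list system is called proper when $n_2$ divides $n_1\Delta_1$ and $\sum_{s\in S} l(s,s') = \Delta_1$ for every $s'\in S$. Let $\Delta_2 := \frac{n_1\Delta_1}{n_2}$. A fair distribution is an assignment $f: S\times\mathbb{N}_{\Delta_1}\to T$ such that: (1) $|\{f(s,i) : i\in\mathbb{N}_{\Delta_1}\}| = \Delta_1$ for every $s\in S$; (2) $|\{(s,i)\in S\times\mathbb{N}_{\Delta_1} : f(s,i)=t\}| = \Delta_2$ for every $t\in T$; (3) if $(s_1,i_1)\neq(s_2,i_2)$ and $\mathcal{L}(s_1,i_1)=\mathcal{L}(s_2,i_2)$, then $f(s_1,i_1)\neq f(s_2,i_2)$, for all $s_1,s_2\in S$ and $i_1,i_2\in\mathbb{N}_{\Delta_1}$. *)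

theory Defs
  imports Main
begin

definition list_system :: "'a set \<Rightarrow> 'b set \<Rightarrow> nat \<Rightarrow> ('a \<Rightarrow> nat \<Rightarrow> 'a) \<Rightarrow> bool" where
  "list_system S T \<Delta>1 L \<longleftrightarrow>
     finite S \<and> finite T \<and> \<Delta>1 \<le> card T \<and>
     (\<forall>s\<in>S. \<forall>i<\<Delta>1. L s i \<in> S)"

definition occ :: "nat \<Rightarrow> ('a \<Rightarrow> nat \<Rightarrow> 'a) \<Rightarrow> 'a \<Rightarrow> 'a \<Rightarrow> nat" where
  "occ \<Delta>1 L s s' = card {i. i < \<Delta>1 \<and> L s i = s'}"

definition proper_list_system :: "'a set \<Rightarrow> 'b set \<Rightarrow> nat \<Rightarrow> ('a \<Rightarrow> nat \<Rightarrow> 'a) \<Rightarrow> bool" where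
  "proper_list_system S T \<Delta>1 L \<longleftrightarrow>
     list_system S T \<Delta>1 L \<and>
     card T dvd card S * \<Delta>1 \<and>
     (\<forall>s'\<in>S. (\<Sum>s\<in>S. occ \<Delta>1 L s s') = \<Delta>1)"

definition Delta2 :: "'a set \<Rightarrow> 'b set \<Rightarrow> nat \<Rightarrow> nat" where
  "Delta2 S T \<Delta>1 = card S * \<Delta>1 div card T"

definition fair_distribution ::
  "'a set \<Rightarrow> 'b set \<Rightarrow> nat \<Rightarrow> ('a \<Rightarrow> nat \<Rightarrow> 'a) \<Rightarrow> ('a \<Rightarrow> nat \<Rightarrow> 'b) \<Rightarrow> bool" where
  "fair_distribution S T \<Delta>1 L f \<longleftrightarrow>
     (\<forall>s\<in>S. \<forall>i<\<Delta>1. f s i \<in> T) \<and>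
     (\<forall>s\<in>S. card (f s ` {..<\<Delta>1}) = \<Delta>1) \<and>
     (\<forall>t\<in>T. card {(s, i). s \<in> S \<and> i < \<Delta>1 \<and> f s i = t} = Delta2 S T \<Delta>1) \<and>
     (\<forall>s1\<in>S. \<forall>s2\<in>S. \<forall>i1<\<Delta>1. \<forall>i2<\<Delta>1.
        (s1, i1) \<noteq> (s2, i2) \<and> L s1 i1 = L s2 i2 \<longrightarrow> f s1 i1 \<noteq> f s2 i2)"

end

theory Submission
  imports Defs
begin

inductive_set kchain :: "'e set \<Rightarrow> ('e \<Rightarrow> nat) \<Rightarrow> ('e \<Rightarrow> 'l) \<Rightarrow> ('e \<Rightarrow> 'r) \<Rightarrow> nat \<Rightarrow> nat \<Rightarrow> 'e \<Rightarrow> 'e set"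
  for F c lft rgt a b e1 where
  kstart: "e1 \<in> kchain F c lft rgt a b e1"
| kA: "\<lbrakk>e \<in> kchain F c lft rgt a b e1; c e = a; e' \<in> F; c e' = b; lft e' = lft e\<rbrakk> \<Longrightarrow> e' \<in> kchain F c lft rgt a b e1"
| kB: "\<lbrakk>e \<in> kchain F c lft rgt a b e1; c e = b; e' \<in> F; c e' = a; rgt e' = rgt e\<rbrakk> \<Longrightarrow> e' \<in> kchain F c lft rgt a b e1"

lemma kchain_sub:
  assumes "e \<in> kchain F c lft rgt a b e1" "e1 \<in> F" "c e1 = a"
  shows "e \<in> F \<and> (c e = a \<or> c e = b)"
  using assms by (induction rule: kchain.induct) auto

lemma kchain_pred:
  assumes "e \<in> kchain F c lft rgt a b e1"
  shows "e = e1 \<or> (c e = b \<and> (\<exists>p\<in>kchain F c lft rgt a b e1. c p = a \<and> lft p = lft e))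
     \<or> (c e = a \<and> (\<exists>p\<in>kchain F c lft rgt a b e1. c p = b \<and> rgt p = rgt e))"
  using assms by (induction rule: kchain.induct) (auto intro: kchain.intros)

definition proper_col :: "'e set \<Rightarrow> ('e \<Rightarrow> 'l) \<Rightarrow> ('e \<Rightarrow> 'r) \<Rightarrow> ('e \<Rightarrow> nat) \<Rightarrow> bool" where
  "proper_col E lft rgt c \<longleftrightarrow> (\<forall>e\<in>E. \<forall>e'\<in>E. e \<noteq> e' \<longrightarrow> (lft e = lft e' \<or> rgt e = rgt e') \<longrightarrow> c e \<noteq> c e')"

lemma proper_colD:
  assumes "proper_col E lft rgt c" "e \<in> E" "e' \<in> E" "c e = c e'" "lft e = lft e' \<or> rgt e = rgt e'"
  shows "e = e'"
  using assms unfolding proper_col_def by blast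

lemma kempe_step:
  assumes F: "finite F" "e0 \<notin> F" and pr: "proper_col F lft rgt c" and rg: "\<forall>e\<in>F. c e < k"
  and a: "a < k" "\<forall>e\<in>F. lft e = lft e0 \<longrightarrow> c e \<noteq> a"
  and b: "b < k" "\<forall>e\<in>F. rgt e = rgt e0 \<longrightarrow> c e \<noteq> b"
  shows "\<exists>c'. (\<forall>e\<in>insert e0 F. c' e < k) \<and> proper_col (insert e0 F) lft rgt c'"
proof (cases "\<exists>e1\<in>F. rgt e1 = rgt e0 \<and> c e1 = a")
  case False
  let ?c = "c(e0 := a)"
  have "proper_col (insert e0 F) lft rgt ?c"
    unfolding proper_col_def
  proof (intro ballI impI)
    fix e e' assume h: "e \<in> insert e0 F" "e' \<in> insert e0 F" "e \<noteq> e'" "lft e = lft e' \<or> rgt e = rgt e'"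
    show "?c e \<noteq> ?c e'"
    proof (cases "e = e0")
      case True
      then have "e' \<in> F" "e' \<noteq> e0" using h by auto
      then show ?thesis using True a(2) False h(4) by auto
    next
      case ne: False
      show ?thesis
      proof (cases "e' = e0")
        case True
        then show ?thesis using ne h a(2) False by auto
      next
        case False
        then show ?thesis using ne h pr unfolding proper_col_def by auto
      qed
    qed
  qed
  moreover have "\<forall>e\<in>insert e0 F. ?c e < k" using rg a(1) by auto
  ultimately show ?thesis by (intro exI[of _ ?c] conjI)
next
  case True
  then obtain e1 where e1: "e1 \<in> F" "rgt e1 = rgt e0" "c e1 = a" by blast
  have ab: "a \<noteq> b" using b(2) e1 by auto
  define P where "P = kchain F c lft rgt a b e1"
  have e1P: "e1 \<in> P" unfolding P_def by (rule kstart)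
  have Psub: "\<And>e. e \<in> P \<Longrightarrow> e \<in> F \<and> (c e = a \<or> c e = b)"
    using kchain_sub e1 unfolding P_def by metis
  have Ppred: "\<And>e. e \<in> P \<Longrightarrow> e = e1 \<or> (c e = b \<and> (\<exists>p\<in>P. c p = a \<and> lft p = lft e))
      \<or> (c e = a \<and> (\<exists>p\<in>P. c p = b \<and> rgt p = rgt e))"
    unfolding P_def by (rule kchain_pred)
  have PA: "\<And>e e'. e \<in> P \<Longrightarrow> c e = a \<Longrightarrow> e' \<in> F \<Longrightarrow> c e' = b \<Longrightarrow> lft e' = lft e \<Longrightarrow> e' \<in> P"
    unfolding P_def by (rule kA)
  have PB: "\<And>e e'. e \<in> P \<Longrightarrow> c e = b \<Longrightarrow> e' \<in> F \<Longrightarrow> c e' = a \<Longrightarrow> rgt e' = rgt e \<Longrightarrow> e' \<in> P"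
    unfolding P_def by (rule kB)
  have clos: "e' \<in> P" if h: "e \<in> P" "e' \<in> F" "e \<noteq> e'" "lft e = lft e' \<or> rgt e = rgt e'" "c e' = a \<or> c e' = b" for e e'
  proof -
    have eF: "e \<in> F" "c e = a \<or> c e = b" using Psub h(1) by auto
    have ne: "c e \<noteq> c e'" using pr h eF unfolding proper_col_def by blast
    show "e' \<in> P"
    proof (cases "c e = a")
      case ca: True
      then have cb: "c e' = b" using ne h(5) by auto
      show ?thesis
      proof (cases "lft e = lft e'")
        case True then show ?thesis using PA h ca cb by metis
      next
        case False
        then have r: "rgt e = rgt e'" using h(4) by auto
        from Ppred[OF h(1)] show ?thesis
        proof (elim disjE)
          assume "e = e1" then show ?thesis using r e1 b(2) h(2) cb by auto
        next
          assume "c e = b \<and> (\<exists>p\<in>P. c p = a \<and> lft p = lft e)" then show ?thesis using ca ab by auto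
        next
          assume "c e = a \<and> (\<exists>p\<in>P. c p = b \<and> rgt p = rgt e)"
          then obtain p where p: "p \<in> P" "c p = b" "rgt p = rgt e" by blast
          have "p = e'" using proper_colD[OF pr, of p e'] p Psub[OF p(1)] h(2) r cb by simp
          then show ?thesis using p by simp
        qed
      qed
    next
      case cna: False
      then have cb: "c e = b" using eF by auto
      then have ca': "c e' = a" using ne h(5) by auto
      show ?thesis
      proof (cases "rgt e = rgt e'")
        case True then show ?thesis using PB h cb ca' by metis
      next
        case False
        then have l: "lft e = lft e'" using h(4) by auto
        have "e \<noteq> e1" using cb e1(3) ab by auto
        with Ppred[OF h(1)] cb ab obtain p where p: "p \<in> P" "c p = a" "lft p = lft e" by auto
        have "p = e'" using proper_colD[OF pr, of p e'] p Psub[OF p(1)] h(2) l ca' by simp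
        then show ?thesis using p by simp
      qed
    qed
  qed
  define c' where "c' = (\<lambda>e. if e = e0 then a else if e \<in> P then (if c e = a then b else a) else c e)"
  have range: "\<forall>e\<in>insert e0 F. c' e < k" using rg a(1) b(1) unfolding c'_def by auto
  have main: "c' e \<noteq> c' e'" if h: "e \<in> F" "e' \<in> insert e0 F" "e \<noteq> e'" "lft e = lft e' \<or> rgt e = rgt e'" for e e'
  proof (cases "e' = e0")
    case True
    have ne0: "e \<noteq> e0" using h(1) F(2) by auto
    have c'e': "c' e' = a" using True unfolding c'_def by simp
    show ?thesis
    proof (cases "lft e = lft e0")
      case l: True
      have cna: "c e \<noteq> a" using a(2) h(1) l by auto
      show ?thesis
      proof (cases "e \<in> P")
        case True
        then have "c e = b" using Psub cna by blast
        moreover have "e \<noteq> e1" using cna e1(3) by auto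
        ultimately obtain p where p: "p \<in> P" "c p = a" "lft p = lft e" using Ppred[OF True] ab by auto
        then show ?thesis using a(2) Psub[OF p(1)] l by auto
      next
        case False then show ?thesis using ne0 cna c'e' unfolding c'_def by simp
      qed
    next
      case nl: False
      then have r: "rgt e = rgt e0" using h(4) True by auto
      have cnb: "c e \<noteq> b" using b(2) h(1) r by auto
      show ?thesis
      proof (cases "e \<in> P")
        case True
        then have "c e = a" using Psub[OF True] cnb by blast
        then show ?thesis using ne0 True c'e' ab unfolding c'_def by simp
      next
        case False
        have "c e \<noteq> a"
        proof
          assume "c e = a"
          then have "e = e1" using proper_colD[OF pr, of e e1] h(1) e1 r by simp
          then show False using False e1P by simp
        qed
        then show ?thesis using ne0 False c'e' unfolding c'_def by simp
      qed
    qed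
  next
    case False
    then have e'F: "e' \<in> F" using h(2) by auto
    have ne0: "e \<noteq> e0" "e' \<noteq> e0" using h(1) e'F F(2) by auto
    have cne: "c e \<noteq> c e'" using proper_colD[OF pr h(1) e'F _ h(4)] h(3) by blast
    show ?thesis
    proof (cases "e \<in> P"; cases "e' \<in> P")
      assume "e \<in> P" "e' \<in> P"
      then have "c e = a \<or> c e = b" "c e' = a \<or> c e' = b" using Psub by blast+
      then show ?thesis using ne0 cne \<open>e \<in> P\<close> \<open>e' \<in> P\<close> unfolding c'_def by auto
    next
      assume "e \<in> P" "e' \<notin> P"
      then have "\<not> (c e' = a \<or> c e' = b)" using clos[of e e'] e'F h by blast
      then show ?thesis using ne0 \<open>e \<in> P\<close> \<open>e' \<notin> P\<close> unfolding c'_def by auto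
    next
      assume "e \<notin> P" "e' \<in> P"
      moreover have "e' \<noteq> e" "lft e' = lft e \<or> rgt e' = rgt e" using h by auto
      ultimately have "\<not> (c e = a \<or> c e = b)" using clos[of e' e] h(1) by blast
      then show ?thesis using ne0 \<open>e \<notin> P\<close> \<open>e' \<in> P\<close> unfolding c'_def by auto
    next
      assume "e \<notin> P" "e' \<notin> P"
      then show ?thesis using ne0 cne unfolding c'_def by auto
    qed
  qed
  have "proper_col (insert e0 F) lft rgt c'"
    unfolding proper_col_def
  proof (intro ballI impI)
    fix e e' assume h: "e \<in> insert e0 F" "e' \<in> insert e0 F" "e \<noteq> e'" "lft e = lft e' \<or> rgt e = rgt e'"
    show "c' e \<noteq> c' e'"
    proof (cases "e \<in> F")
      case True then show ?thesis using main h by blast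
    next
      case False
      then have "e' \<in> F" "e = e0" using h by auto
      then show ?thesis using main[of e' e] h by auto
    qed
  qed
  then show ?thesis using range by blast
qed

lemma konig:
  assumes "finite E" "\<And>x. card {e\<in>E. lft e = x} \<le> k" "\<And>y. card {e\<in>E. rgt e = y} \<le> k"
  shows "\<exists>c. (\<forall>e\<in>E. c e < k) \<and> proper_col E lft rgt c"
  using assms
proof (induction E rule: finite_induct)
  case empty then show ?case by (auto simp: proper_col_def)
next
  case (insert e0 F)
  have dl: "card {e\<in>F. lft e = x} \<le> k" for x
  proof -
    have "{e\<in>F. lft e = x} \<subseteq> {e\<in>insert e0 F. lft e = x}" by auto
    moreover have "finite {e\<in>insert e0 F. lft e = x}" using insert(1) by simp
    ultimately have "card {e\<in>F. lft e = x} \<le> card {e\<in>insert e0 F. lft e = x}" by (rule card_mono[rotated])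
    then show ?thesis using insert.prems(1)[of x] by linarith
  qed
  have dr: "card {e\<in>F. rgt e = y} \<le> k" for y
  proof -
    have "{e\<in>F. rgt e = y} \<subseteq> {e\<in>insert e0 F. rgt e = y}" by auto
    moreover have "finite {e\<in>insert e0 F. rgt e = y}" using insert(1) by simp
    ultimately have "card {e\<in>F. rgt e = y} \<le> card {e\<in>insert e0 F. rgt e = y}" by (rule card_mono[rotated])
    then show ?thesis using insert.prems(2)[of y] by linarith
  qed
  obtain c where c: "\<forall>e\<in>F. c e < k" "proper_col F lft rgt c" using insert.IH dl dr by blast
  have "{e \<in> insert e0 F. lft e = lft e0} = insert e0 {e\<in>F. lft e = lft e0}" by auto
  then have "card {e \<in> insert e0 F. lft e = lft e0} = Suc (card {e\<in>F. lft e = lft e0})"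
    using insert(1,2) by simp
  then have cu: "card {e\<in>F. lft e = lft e0} < k" using insert.prems(1)[of "lft e0"] by simp
  have "card (c ` {e\<in>F. lft e = lft e0}) < k"
    using card_image_le[of "{e\<in>F. lft e = lft e0}" c] insert(1) cu by simp
  then have "\<not> {..<k} \<subseteq> c ` {e\<in>F. lft e = lft e0}"
    using card_mono[of "c ` {e\<in>F. lft e = lft e0}" "{..<k}"] insert(1) by auto
  then obtain a where a: "a < k" "\<forall>e\<in>F. lft e = lft e0 \<longrightarrow> c e \<noteq> a" by blast
  have "{e \<in> insert e0 F. rgt e = rgt e0} = insert e0 {e\<in>F. rgt e = rgt e0}" by auto
  then have "card {e \<in> insert e0 F. rgt e = rgt e0} = Suc (card {e\<in>F. rgt e = rgt e0})"
    using insert(1,2) by simp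
  then have cv: "card {e\<in>F. rgt e = rgt e0} < k" using insert.prems(2)[of "rgt e0"] by simp
  have "card (c ` {e\<in>F. rgt e = rgt e0}) < k"
    using card_image_le[of "{e\<in>F. rgt e = rgt e0}" c] insert(1) cv by simp
  then have "\<not> {..<k} \<subseteq> c ` {e\<in>F. rgt e = rgt e0}"
    using card_mono[of "c ` {e\<in>F. rgt e = rgt e0}" "{..<k}"] insert(1) by auto
  then obtain b where b: "b < k" "\<forall>e\<in>F. rgt e = rgt e0 \<longrightarrow> c e \<noteq> b" by blast
  show ?case using kempe_step[OF insert(1,2) c(2) c(1) a b] .
qed

theorem theorem1:
  fixes S :: "'a set" and T :: "'b set" and \<Delta>1 :: nat and L :: "'a \<Rightarrow> nat \<Rightarrow> 'a"
  assumes "proper_list_system S T \<Delta>1 L"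
  shows "\<exists>f. fair_distribution S T \<Delta>1 L f"
proof -
  from assms have fin: "finite S" "finite T" and le: "\<Delta>1 \<le> card T"
    and LS: "\<forall>s\<in>S. \<forall>i<\<Delta>1. L s i \<in> S" and dv: "card T dvd card S * \<Delta>1"
    and reg: "\<forall>s'\<in>S. (\<Sum>s\<in>S. occ \<Delta>1 L s s') = \<Delta>1"
    unfolding proper_list_system_def list_system_def by auto
  define n where "n = card S"
  define k where "k = card T"
  define Dm where "Dm = S \<times> {\<Delta>1..<k}"
  define D where "D = n * (k - \<Delta>1) div k"
  have nk: "n * (k - \<Delta>1) = n * k - n * \<Delta>1" by (simp add: diff_mult_distrib2)
  have kdvd: "k dvd n * (k - \<Delta>1)" unfolding nk using dv unfolding k_def n_def
    by (intro dvd_diff_nat) auto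
  have cardDm0: "card Dm = n * (k - \<Delta>1)" unfolding Dm_def n_def by (simp add: card_cartesian_product)
  have cardDm: "card Dm = D * k" unfolding cardDm0 D_def using kdvd by simp
  have "card ({..<D} \<times> {..<k}) = D * k" by (simp add: card_cartesian_product)
  then obtain \<phi> where \<phi>: "bij_betw \<phi> Dm ({..<D} \<times> {..<k})"
    using finite_same_card_bij[of Dm "{..<D} \<times> {..<k}"] cardDm fin unfolding Dm_def by auto
  define H where "H = S \<times> {..<k}"
  define rg where "rg = (\<lambda>e::'a\<times>nat. if snd e < \<Delta>1 then Inl (L (fst e) (snd e)) else (Inr (fst (\<phi> e)) :: 'a + nat))"
  have rgD: "rg e = Inr (fst (\<phi> e))" if "e \<in> Dm" for e
  proof -
    have "\<not> snd e < \<Delta>1" using that unfolding Dm_def by (auto simp: mem_Times_iff)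
    then show ?thesis unfolding rg_def by simp
  qed
  have finH: "finite H" unfolding H_def using fin by auto
  have dl: "card {e\<in>H. fst e = x} \<le> k" for x
  proof -
    have "{e\<in>H. fst e = x} \<subseteq> {x} \<times> {..<k}" unfolding H_def by auto
    then show ?thesis using card_mono[of "{x} \<times> {..<k}" "{e\<in>H. fst e = x}"]
      by (simp add: card_cartesian_product)
  qed
  have dr: "card {e\<in>H. rg e = y} \<le> k" for y
  proof (cases y)
    case (Inl y')
    have eq: "{e\<in>H. rg e = y} = Sigma S (\<lambda>s. {i. i < \<Delta>1 \<and> L s i = y'})"
    proof (rule set_eqI)
      fix e :: "'a \<times> nat"
      obtain s i where e: "e = (s, i)" by (cases e)
      have lek: "\<Delta>1 \<le> k" using le unfolding k_def .
      show "e \<in> {e\<in>H. rg e = y} \<longleftrightarrow> e \<in> Sigma S (\<lambda>s. {i. i < \<Delta>1 \<and> L s i = y'})"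
        unfolding e H_def Inl using lek by (cases "i < \<Delta>1") (auto simp: rg_def)
    qed
    have "card {e\<in>H. rg e = y} = (\<Sum>s\<in>S. occ \<Delta>1 L s y')"
      unfolding eq occ_def using fin by (subst card_SigmaI) auto
    also have "\<dots> \<le> k"
    proof (cases "y' \<in> S")
      case True then show ?thesis using reg le k_def by auto
    next
      case False
      then have "occ \<Delta>1 L s y' = 0" if "s \<in> S" for s
        using LS that unfolding occ_def by auto
      then show ?thesis by simp
    qed
    finally show ?thesis .
  next
    case (Inr d)
    have eq: "{e\<in>H. rg e = y} = {e\<in>Dm. fst (\<phi> e) = d}"
    proof (rule set_eqI)
      fix e :: "'a \<times> nat"
      show "e \<in> {e\<in>H. rg e = y} \<longleftrightarrow> e \<in> {e\<in>Dm. fst (\<phi> e) = d}"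
        proof -
        obtain s i where e: "e = (s, i)" by (cases e)
        show ?thesis unfolding e H_def rg_def Inr Dm_def
          by (cases "i < \<Delta>1") auto
      qed
    qed
    have "inj_on \<phi> {e\<in>Dm. fst (\<phi> e) = d}"
      by (rule inj_on_subset[OF bij_betw_imp_inj_on[OF \<phi>]]) auto
    moreover have "\<phi> ` {e\<in>Dm. fst (\<phi> e) = d} \<subseteq> {d} \<times> {..<k}"
    proof (rule image_subsetI)
      fix e assume "e \<in> {e\<in>Dm. fst (\<phi> e) = d}"
      then have "\<phi> e \<in> {..<D} \<times> {..<k}" "fst (\<phi> e) = d" using bij_betw_apply[OF \<phi>] by auto
      then show "\<phi> e \<in> {d} \<times> {..<k}" by (cases "\<phi> e") auto
    qed
    ultimately have "card {e\<in>Dm. fst (\<phi> e) = d} \<le> card ({d} \<times> {..<k})"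
      by (rule card_inj_on_le) auto
    then show ?thesis unfolding eq by (simp add: card_cartesian_product)
  qed
  obtain col where col: "\<forall>e\<in>H. col e < k" "proper_col H fst rg col"
    using konig[OF finH dl dr] by blast
  have colinj: "col e \<noteq> col e'" if "e \<in> H" "e' \<in> H" "e \<noteq> e'" "fst e = fst e' \<or> rg e = rg e'" for e e'
    using col(2) that unfolding proper_col_def by blast
  obtain \<tau> where \<tau>: "bij_betw \<tau> {..<k} T"
    using finite_same_card_bij[of "{..<k}" T] fin unfolding k_def by auto
  define f where "f = (\<lambda>s i. \<tau> (col (s, i)))"
  have inH: "(s, i) \<in> H" if "s \<in> S" "i < \<Delta>1" for s i
    using that le unfolding H_def k_def by auto
  have P1: "\<forall>s\<in>S. \<forall>i<\<Delta>1. f s i \<in> T"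
    using inH col(1) bij_betw_apply[OF \<tau>] unfolding f_def by auto
  have finj: "f s1 i1 \<noteq> f s2 i2" if "s1 \<in> S" "s2 \<in> S" "i1 < \<Delta>1" "i2 < \<Delta>1" "(s1, i1) \<noteq> (s2, i2)"
    "s1 = s2 \<or> L s1 i1 = L s2 i2" for s1 s2 i1 i2
  proof -
    have r1: "rg (s1, i1) = Inl (L s1 i1)" using that(3) unfolding rg_def by simp
    have r2: "rg (s2, i2) = Inl (L s2 i2)" using that(4) unfolding rg_def by simp
    have "fst (s1, i1) = fst (s2, i2) \<or> rg (s1, i1) = rg (s2, i2)"
      using that(6) unfolding r1 r2 by auto
    then have "col (s1, i1) \<noteq> col (s2, i2)"
      using colinj[OF inH[OF that(1,3)] inH[OF that(2,4)] that(5)] by blast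
    moreover have "col (s1, i1) \<in> {..<k}" "col (s2, i2) \<in> {..<k}" using col(1) inH that by auto
    ultimately show ?thesis using bij_betw_imp_inj_on[OF \<tau>] unfolding f_def inj_on_def by metis
  qed
  have P2: "\<forall>s\<in>S. card (f s ` {..<\<Delta>1}) = \<Delta>1"
  proof
    fix s assume s: "s \<in> S"
    have "inj_on (f s) {..<\<Delta>1}" unfolding inj_on_def using finj[OF s s] by blast
    then show "card (f s ` {..<\<Delta>1}) = \<Delta>1" by (simp add: card_image)
  qed
  have P4: "\<forall>s1\<in>S. \<forall>s2\<in>S. \<forall>i1<\<Delta>1. \<forall>i2<\<Delta>1.
        (s1, i1) \<noteq> (s2, i2) \<and> L s1 i1 = L s2 i2 \<longrightarrow> f s1 i1 \<noteq> f s2 i2"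
    using finj by blast
  have P3: "\<forall>t\<in>T. card {(s, i). s \<in> S \<and> i < \<Delta>1 \<and> f s i = t} = Delta2 S T \<Delta>1"
  proof
    fix t assume t: "t \<in> T"
    then have kpos: "k > 0" unfolding k_def using fin card_gt_0_iff by blast
    obtain cc where cc: "cc < k" "\<tau> cc = t" using \<tau> t unfolding bij_betw_def by auto
    define A where "A = {e\<in>H. col e = cc}"
    define B where "B = {e\<in>Dm. col e = cc}"
    have BA: "B \<subseteq> A" unfolding A_def B_def H_def Dm_def by auto
    have eqR: "{(s, i). s \<in> S \<and> i < \<Delta>1 \<and> f s i = t} = A - B"
    proof -
      have "f s i = t \<longleftrightarrow> col (s, i) = cc" if "s \<in> S" "i < \<Delta>1" for s i
      proof -
        have "col (s, i) \<in> {..<k}" using col(1) inH[OF that] by auto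
        then show ?thesis unfolding f_def cc(2)[symmetric]
          using inj_on_eq_iff[OF bij_betw_imp_inj_on[OF \<tau>]] cc(1) by auto
      qed
      note key = this
      have lek: "\<Delta>1 \<le> k" using le unfolding k_def .
      show ?thesis
      proof (rule set_eqI)
        fix e :: "'a \<times> nat"
        obtain s i where e: "e = (s, i)" by (cases e)
        show "e \<in> {(s, i). s \<in> S \<and> i < \<Delta>1 \<and> f s i = t} \<longleftrightarrow> e \<in> A - B"
          unfolding e A_def B_def H_def Dm_def using key[of s i] lek by auto
      qed
    qed
    have cardA: "card A = n"
    proof -
      have one: "card {i. i < k \<and> col (s, i) = cc} = 1" if s: "s \<in> S" for s
      proof -
        have inj: "inj_on (\<lambda>i. col (s, i)) {..<k}"
        proof (rule inj_onI)
          fix i j assume ij: "i \<in> {..<k}" "j \<in> {..<k}" "col (s, i) = col (s, j)"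
          show "i = j"
          proof (rule ccontr)
            assume "i \<noteq> j"
            then show False using colinj[of "(s, i)" "(s, j)"] ij s unfolding H_def by auto
          qed
        qed
        have "(\<lambda>i. col (s, i)) ` {..<k} \<subseteq> {..<k}" using col(1) s unfolding H_def by auto
        then have "(\<lambda>i. col (s, i)) ` {..<k} = {..<k}" using inj by (intro endo_inj_surj) auto
        then obtain i where i: "i < k" "col (s, i) = cc" using cc(1) by (metis imageE lessThan_iff)
        have "{i. i < k \<and> col (s, i) = cc} = {i}"
          using i inj unfolding inj_on_def by auto
        then show ?thesis by simp
      qed
      have "A = Sigma S (\<lambda>s. {i. i < k \<and> col (s, i) = cc})" unfolding A_def H_def by auto
      then have "card A = (\<Sum>s\<in>S. card {i. i < k \<and> col (s, i) = cc})" using fin by simp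
      also have "\<dots> = n" using one unfolding n_def by simp
      finally show ?thesis .
    qed
    have cardB: "card B = D"
    proof -
      have "bij_betw (\<lambda>e. fst (\<phi> e)) B {..<D}"
        unfolding bij_betw_def
      proof
        show "inj_on (\<lambda>e. fst (\<phi> e)) B"
        proof (rule inj_onI)
          fix e e' assume h: "e \<in> B" "e' \<in> B" "fst (\<phi> e) = fst (\<phi> e')"
          then have "rg e = rg e'" unfolding B_def using rgD by auto
          moreover have "e \<in> H" "e' \<in> H" using h unfolding B_def Dm_def H_def by auto
          moreover have "col e = col e'" using h unfolding B_def by auto
          ultimately show "e = e'" using colinj by blast
        qed
        show "(\<lambda>e. fst (\<phi> e)) ` B = {..<D}"
        proof
          show "(\<lambda>e. fst (\<phi> e)) ` B \<subseteq> {..<D}"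
          proof (rule image_subsetI)
            fix e assume "e \<in> B"
            then have "\<phi> e \<in> {..<D} \<times> {..<k}" using bij_betw_apply[OF \<phi>] unfolding B_def by auto
            then show "fst (\<phi> e) \<in> {..<D}" by auto
          qed
          show "{..<D} \<subseteq> (\<lambda>e. fst (\<phi> e)) ` B"
          proof
            fix d assume d: "d \<in> {..<D}"
            define Bd where "Bd = {e\<in>Dm. fst (\<phi> e) = d}"
            have "\<phi> ` Bd = {d} \<times> {..<k}"
            proof
              show "\<phi> ` Bd \<subseteq> {d} \<times> {..<k}"
              proof (rule image_subsetI)
                fix e assume "e \<in> Bd"
                then have "\<phi> e \<in> {..<D} \<times> {..<k}" "fst (\<phi> e) = d" using bij_betw_apply[OF \<phi>] unfolding Bd_def by auto
                then show "\<phi> e \<in> {d} \<times> {..<k}" by (cases "\<phi> e") auto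
              qed
              show "{d} \<times> {..<k} \<subseteq> \<phi> ` Bd"
              proof
                fix x assume "x \<in> {d} \<times> {..<k}"
                then have "x \<in> {..<D} \<times> {..<k}" "fst x = d" using d by auto
                then have "x \<in> \<phi> ` Dm" using bij_betw_imp_surj_on[OF \<phi>] by simp
                then obtain e where "e \<in> Dm" "\<phi> e = x" by blast
                then show "x \<in> \<phi> ` Bd" unfolding Bd_def using \<open>fst x = d\<close> by auto
              qed
            qed
            moreover have "inj_on \<phi> Bd" unfolding Bd_def
              by (rule inj_on_subset[OF bij_betw_imp_inj_on[OF \<phi>]]) auto
            ultimately have "card Bd = card ({d} \<times> {..<k})" by (metis card_image)
            then have cBd: "card Bd = k" by (simp add: card_cartesian_product)
            have BdH: "Bd \<subseteq> H" unfolding Bd_def Dm_def H_def by auto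
            have injc: "inj_on col Bd"
            proof (rule inj_onI)
              fix e e' assume h: "e \<in> Bd" "e' \<in> Bd" "col e = col e'"
              then have "rg e = rg e'" unfolding Bd_def using rgD by auto
              then show "e = e'" using colinj h BdH by blast
            qed
            have finBd: "finite Bd" using BdH finH finite_subset by blast
            have "col ` Bd \<subseteq> {..<k}" using col(1) BdH by auto
            moreover have "card (col ` Bd) = card {..<k}" using injc cBd by (simp add: card_image)
            ultimately have "col ` Bd = {..<k}" by (intro card_subset_eq) auto
            then obtain e where "e \<in> Bd" "col e = cc" using cc(1) by (metis imageE lessThan_iff)
            then show "d \<in> (\<lambda>e. fst (\<phi> e)) ` B" unfolding B_def Bd_def by auto
          qed
        qed
      qed
      then show ?thesis by (simp add: bij_betw_same_card)
    qed
    have finA: "finite A" unfolding A_def using finH by auto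
    have "card (A - B) = n - D" using card_Diff_subset[OF finite_subset[OF BA finA] BA] cardA cardB by simp
    moreover have "n - D = Delta2 S T \<Delta>1"
    proof -
      define q where "q = n * \<Delta>1 div k"
      have qk: "q * k = n * \<Delta>1" unfolding q_def using dv unfolding n_def k_def by simp
      have "D * k = n * (k - \<Delta>1)" using kdvd unfolding D_def by simp
      also have "\<dots> = (n - q) * k" unfolding nk qk[symmetric] by (simp add: diff_mult_distrib)
      finally have "D = n - q" using kpos by simp
      moreover have "q \<le> n"
      proof -
        have "q * k \<le> n * k" unfolding qk using le k_def by simp
        then show ?thesis using kpos by simp
      qed
      ultimately have "n - D = q" by simp
      then show ?thesis unfolding q_def Delta2_def n_def k_def .
    qed
    ultimately show "card {(s, i). s \<in> S \<and> i < \<Delta>1 \<and> f s i = t} = Delta2 S T \<Delta>1"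
      unfolding eqR by simp
  qed
  show ?thesis unfolding fair_distribution_def using P1 P2 P3 P4 by blast
qed

end
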